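(* Let $(\mathbb{H},\langle\cdot,\cdot\rangle)$ be a separable Hilbert space with norm $\|\cdot\|_{\mathbb{H}}$, and let $(D_j)_{j\geq1}$ be a square integrable $\mathbb{H}$-valued martingale difference sequence with respect to a filtration $(\mathcal{F}_j)_{j\geq0}$ such that for each $j\geq 1$, $$\mathbb{E}[\|D_j\|_{\mathbb{H}}^2\mid\mathcal{F}_{j-1}]=\mathbb{E}[\|D_j\|_{\mathbb{H}}^2\mid\mathcal{F}_0]\quad\text{a.s.}$$ Then for every $n\geq1$ and all $x,y>0$, $$\mathbb{P}\Big(\max_{1\leq k\leq n}\Big\|\sum_{j=1}^kD_j\Big\|_{\mathbb{H}}>x\Big)\leq 4\exp\Big(-\frac{x^2}{y^2}\Big)+4\int_1^\infty u\,\mathbb{P}\Big(\sqrt{\sum_{j=1}^n\|D_j\|_{\mathbb{H}}^2}>\frac{yu}{8}\Big)\,du.$$ *)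

theory Defs
  imports "HOL-Probability.Probability"
begin

definition filtration :: "'a measure \<Rightarrow> (nat \<Rightarrow> 'a measure) \<Rightarrow> bool" where
  "filtration M F \<longleftrightarrow> (\<forall>j. subalgebra M (F j)) \<and> (\<forall>i j. i \<le> j \<longrightarrow> sets (F i) \<subseteq> sets (F j))"

definition martingale_difference ::
  "'a measure \<Rightarrow> (nat \<Rightarrow> 'a measure) \<Rightarrow> (nat \<Rightarrow> 'a \<Rightarrow> 'b::{banach, second_countable_topology}) \<Rightarrow> bool" where
  "martingale_difference M F D \<longleftrightarrow>
     (\<forall>j\<ge>1. D j \<in> borel_measurable (F j) \<and> integrable M (D j) \<and>
        (\<forall>A\<in>sets (F (j - 1)). set_lebesgue_integral M A (D j) = 0))"

end

theory Submission
  imports Defs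
begin

lemma exp_quad: fixes t :: real shows "exp (t - t\<^sup>2) \<le> 1 + t + t\<^sup>2"
proof -
  have pe: "1 - t + t\<^sup>2 = (t - 1/2)\<^sup>2 + 3/4" by (simp add: power2_eq_square algebra_simps)
  have p: "0 < 1 - t + t\<^sup>2" unfolding pe by (simp add: add_nonneg_pos)
  have e: "1 - t + t\<^sup>2 \<le> exp (-(t - t\<^sup>2))" using exp_ge_add_one_self[of "t\<^sup>2 - t"] by (simp add: algebra_simps)
  have "exp (t - t\<^sup>2) = 1 / exp (-(t - t\<^sup>2))" using exp_minus[of "t - t\<^sup>2"] by (simp add: divide_inverse)
  also have "\<dots> \<le> 1 / (1 - t + t\<^sup>2)" using p e by (intro divide_left_mono) auto
  also have "\<dots> \<le> 1 + t + t\<^sup>2"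
  proof -
    have q: "(1 + t + t\<^sup>2) * (1 - t + t\<^sup>2) = 1 + t\<^sup>2 + (t\<^sup>2)\<^sup>2" by (simp add: power2_eq_square algebra_simps)
    have "1 \<le> (1 + t + t\<^sup>2) * (1 - t + t\<^sup>2)" unfolding q by simp
    then show ?thesis using p by (simp add: divide_le_eq)
  qed
  finally show ?thesis .
qed

lemma cosh_shift: fixes a s :: real
  shows "cosh (a + s) * exp (-(s\<^sup>2)) \<le> cosh a + s * sinh a + s\<^sup>2 * cosh a"
proof -
  have 1: "exp (s - s\<^sup>2) \<le> 1 + s + s\<^sup>2" by (rule exp_quad)
  have 2: "exp (-s - s\<^sup>2) \<le> 1 - s + s\<^sup>2" using exp_quad[of "-s"] by simp
  have "cosh (a + s) * exp (-(s\<^sup>2)) = (exp a * exp (s - s\<^sup>2) + exp (-a) * exp (-s - s\<^sup>2)) / 2"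
    by (simp add: cosh_def exp_add[symmetric] field_simps exp_diff exp_minus)
  also have "\<dots> \<le> (exp a * (1 + s + s\<^sup>2) + exp (-a) * (1 - s + s\<^sup>2)) / 2"
    using 1 2 by (intro divide_right_mono add_mono mult_left_mono) auto
  also have "\<dots> = cosh a + s * sinh a + s\<^sup>2 * cosh a"
    by (simp add: cosh_def sinh_def field_simps)
  finally show ?thesis .
qed

lemma sinh_le_mult_cosh: fixes z :: real assumes "0 \<le> z" shows "sinh z \<le> z * cosh z"
proof -
  have "(\<lambda>t. t * cosh t - sinh t) 0 \<le> (\<lambda>t. t * cosh t - sinh t) z"
  proof (rule DERIV_nonneg_imp_nondecreasing[OF assms])
    fix t :: real assume t: "0 \<le> t" "t \<le> z"
    show "\<exists>y. ((\<lambda>t. t * cosh t - sinh t) has_real_derivative y) (at t) \<and> 0 \<le> y"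
      by (rule exI[of _ "t * sinh t"]) (auto intro!: derivative_eq_intros mult_nonneg_nonneg t simp: algebra_simps)
  qed
  then show ?thesis by simp
qed

lemma cosh_gauss_mono: fixes u z :: real assumes "0 \<le> u" "u \<le> z"
  shows "cosh z \<le> cosh u * exp ((z\<^sup>2 - u\<^sup>2) / 2)"
proof -
  have "(\<lambda>t. cosh t * exp (-(t\<^sup>2)/2)) z \<le> (\<lambda>t. cosh t * exp (-(t\<^sup>2)/2)) u"
  proof (rule DERIV_nonpos_imp_nonincreasing[OF assms(2)])
    fix t :: real assume t: "u \<le> t" "t \<le> z"
    have "sinh t \<le> t * cosh t" using sinh_le_mult_cosh[of t] t assms by simp
    then show "\<exists>y. ((\<lambda>t. cosh t * exp (-(t\<^sup>2)/2)) has_real_derivative y) (at t) \<and> y \<le> 0"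
      by (intro exI[of _ "(sinh t - t * cosh t) * exp (-(t\<^sup>2)/2)"])
         (auto intro!: derivative_eq_intros mult_nonpos_nonneg simp: algebra_simps)
  qed
  then have "cosh z * exp (-(z\<^sup>2)/2) * exp (z\<^sup>2/2) \<le> cosh u * exp (-(u\<^sup>2)/2) * exp (z\<^sup>2/2)"
    by (intro mult_right_mono) auto
  then show ?thesis by (simp add: mult.assoc exp_add[symmetric] diff_divide_distrib)
qed


lemma key_vec: fixes f d :: "'b::real_inner" and l :: real assumes l: "0 \<le> l"
  shows "cosh (l * norm (f + d)) * exp (-(l\<^sup>2 * (norm d)\<^sup>2))
     \<le> cosh (l * norm f) + l * sinh (l * norm f) * (inner f d / norm f) + l\<^sup>2 * (norm d)\<^sup>2 * cosh (l * norm f)"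
proof -
  define a where "a = l * norm f"
  define s where "s = l * (inner f d / norm f)"
  define R where "R = l\<^sup>2 * (norm d)\<^sup>2"
  define Z where "Z = l * norm (f + d)"
  have sR: "s\<^sup>2 \<le> R"
  proof (cases "f = 0")
    case True then show ?thesis by (simp add: s_def R_def)
  next
    case False
    have "\<bar>inner f d\<bar> \<le> norm f * norm d" by (rule Cauchy_Schwarz_ineq2)
    then have "\<bar>inner f d / norm f\<bar> \<le> norm d" using False by (simp add: divide_le_eq mult.commute)
    then have "(inner f d / norm f)\<^sup>2 \<le> (norm d)\<^sup>2"
      by (metis abs_le_square_iff abs_norm_cancel)
    then show ?thesis unfolding s_def R_def power_mult_distrib
      by (intro mult_left_mono) auto
  qed
  have nfd: "(norm (f + d))\<^sup>2 = (norm f)\<^sup>2 + 2 * inner f d + (norm d)\<^sup>2"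
    by (simp add: power2_norm_eq_inner inner_add_left inner_add_right inner_commute)
  have Zsq: "Z\<^sup>2 = (a + s)\<^sup>2 + (R - s\<^sup>2)"
  proof (cases "f = 0")
    case True then show ?thesis by (simp add: Z_def a_def s_def R_def power_mult_distrib)
  next
    case False
    have "2 * a * s = 2 * l\<^sup>2 * inner f d" using False by (simp add: a_def s_def power2_eq_square)
    then show ?thesis unfolding Z_def R_def power_mult_distrib nfd
      by (simp add: power2_eq_square algebra_simps a_def) metis
  qed
  have Z0: "0 \<le> Z" using l by (simp add: Z_def)
  have UZ: "\<bar>a + s\<bar> \<le> Z" using Zsq sR Z0
    by (metis abs_le_square_iff abs_of_nonneg le_add_same_cancel1 diff_ge_0_iff_ge)
  have "cosh Z \<le> cosh \<bar>a + s\<bar> * exp ((Z\<^sup>2 - \<bar>a + s\<bar>\<^sup>2) / 2)"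
    by (rule cosh_gauss_mono[OF _ UZ]) simp
  also have "cosh \<bar>a + s\<bar> = cosh (a + s)" by (simp add: abs_real_def)
  also have "Z\<^sup>2 - \<bar>a + s\<bar>\<^sup>2 = R - s\<^sup>2" using Zsq by simp
  finally have c1: "cosh Z \<le> cosh (a + s) * exp ((R - s\<^sup>2) / 2)" .
  have "cosh Z * exp (- R) \<le> cosh (a + s) * exp ((R - s\<^sup>2) / 2) * exp (- R)"
    using c1 by (intro mult_right_mono) auto
  also have "\<dots> = cosh (a + s) * exp ((R - s\<^sup>2) / 2 - R)" by (simp add: mult.assoc exp_add[symmetric])
  also have "\<dots> \<le> cosh (a + s) * exp (- (s\<^sup>2))"
    using sR by (intro mult_left_mono) (auto simp: cosh_real_nonneg field_simps)
  also have "\<dots> \<le> cosh a + s * sinh a + s\<^sup>2 * cosh a" by (rule cosh_shift)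
  also have "\<dots> \<le> cosh a + s * sinh a + R * cosh a"
    using sR by (intro add_left_mono mult_right_mono) (auto simp: cosh_real_nonneg)
  finally show ?thesis by (simp add: a_def s_def R_def Z_def ac_simps)
qed

lemma borel_measurable_cosh_real[measurable]: "(cosh :: real \<Rightarrow> real) \<in> borel_measurable borel"
  by (intro borel_measurable_continuous_onI continuous_intros)

lemma borel_measurable_sinh_real[measurable]: "(sinh :: real \<Rightarrow> real) \<in> borel_measurable borel"
  by (intro borel_measurable_continuous_onI continuous_intros)

lemma simple_orth:
  fixes D :: "'a \<Rightarrow> 'b::{real_inner, banach, second_countable_topology}"
  assumes sub: "subalgebra M Fk" and iD: "integrable M D"
    and z: "\<forall>A\<in>sets Fk. set_lebesgue_integral M A D = 0"
    and sH: "simple_function Fk H"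
  shows "(\<integral>\<omega>. inner (H \<omega>) (D \<omega>) \<partial>M) = 0"
proof -
  have sp: "space Fk = space M" using sub by (simp add: subalgebra_def)
  define S where "S = H ` space M"
  have fin: "finite S" using simple_functionD(1)[OF sH] sp by (simp add: S_def)
  define A where "A c = H -` {c} \<inter> space M" for c
  have AF: "A c \<in> sets Fk" for c using simple_functionD(2)[OF sH, of "{c}"] sp by (simp add: A_def)
  have AM: "A c \<in> sets M" for c using AF sub by (auto simp: subalgebra_def)
  have pw: "inner (H \<omega>) (D \<omega>) = (\<Sum>c\<in>S. inner c (indicator (A c) \<omega> *\<^sub>R D \<omega>))" if "\<omega> \<in> space M" for \<omega>
  proof -
    have "(\<Sum>c\<in>S. inner c (indicator (A c) \<omega> *\<^sub>R D \<omega>)) = (\<Sum>c\<in>S. if H \<omega> = c then inner c (D \<omega>) else 0)"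
      using that by (intro sum.cong) (auto simp: A_def indicator_def)
    also have "\<dots> = inner (H \<omega>) (D \<omega>)" using that fin by (simp add: sum.delta S_def)
    finally show ?thesis by simp
  qed
  have "(\<integral>\<omega>. inner (H \<omega>) (D \<omega>) \<partial>M) = (\<integral>\<omega>. (\<Sum>c\<in>S. inner c (indicator (A c) \<omega> *\<^sub>R D \<omega>)) \<partial>M)"
    using pw by (intro Bochner_Integration.integral_cong) auto
  also have "\<dots> = (\<Sum>c\<in>S. (\<integral>\<omega>. inner c (indicator (A c) \<omega> *\<^sub>R D \<omega>) \<partial>M))"
    by (intro Bochner_Integration.integral_sum integrable_inner_right integrable_mult_indicator AM iD)
  also have "\<dots> = (\<Sum>c\<in>S. inner c (set_lebesgue_integral M (A c) D))"
  proof (intro sum.cong refl)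
    fix c show "(\<integral>\<omega>. inner c (indicator (A c) \<omega> *\<^sub>R D \<omega>) \<partial>M) = inner c (set_lebesgue_integral M (A c) D)"
      unfolding set_lebesgue_integral_def
      by (rule integral_inner_right) (rule integrable_mult_indicator[OF AM iD])
  qed
  also have "\<dots> = 0" using z AF by simp
  finally show ?thesis .
qed

lemma mart_orth:
  fixes D :: "'a \<Rightarrow> 'b::{real_inner, banach, second_countable_topology}"
  assumes sub: "subalgebra M Fk" and iD: "integrable M D"
    and z: "\<forall>A\<in>sets Fk. set_lebesgue_integral M A D = 0"
    and mH: "H \<in> borel_measurable Fk" and bH: "\<And>\<omega>. \<omega> \<in> space M \<Longrightarrow> norm (H \<omega>) \<le> C"
  shows "(\<integral>\<omega>. inner (H \<omega>) (D \<omega>) \<partial>M) = 0"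
proof -
  have sp: "space Fk = space M" using sub by (simp add: subalgebra_def)
  obtain Hs where sHs: "\<And>i. simple_function Fk (Hs i)"
    and lim: "\<And>\<omega>. \<omega> \<in> space Fk \<Longrightarrow> (\<lambda>i. Hs i \<omega>) \<longlonglongrightarrow> H \<omega>"
    and bd: "\<And>i \<omega>. \<omega> \<in> space Fk \<Longrightarrow> dist (Hs i \<omega>) 0 \<le> 2 * dist (H \<omega>) 0"
    using borel_measurable_implies_sequence_metric[OF mH, of 0] by blast
  have mHs: "Hs i \<in> borel_measurable M" for i
    by (rule measurable_from_subalg[OF sub borel_measurable_simple_function[OF sHs]])
  have mHM: "H \<in> borel_measurable M" by (rule measurable_from_subalg[OF sub mH])
  have mD: "D \<in> borel_measurable M" using iD by auto
  have "(\<lambda>i. \<integral>\<omega>. inner (Hs i \<omega>) (D \<omega>) \<partial>M) \<longlonglongrightarrow> (\<integral>\<omega>. inner (H \<omega>) (D \<omega>) \<partial>M)"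
  proof (rule integral_dominated_convergence[where w = "\<lambda>\<omega>. 2 * C * norm (D \<omega>)"])
    show "(\<lambda>\<omega>. inner (H \<omega>) (D \<omega>)) \<in> borel_measurable M" using mHM mD by measurable
    show "(\<lambda>\<omega>. inner (Hs i \<omega>) (D \<omega>)) \<in> borel_measurable M" for i using mHs[of i] mD by measurable
    show "integrable M (\<lambda>\<omega>. 2 * C * norm (D \<omega>))" using iD by auto
    show "AE \<omega> in M. (\<lambda>i. inner (Hs i \<omega>) (D \<omega>)) \<longlonglongrightarrow> inner (H \<omega>) (D \<omega>)"
      using lim sp by (intro AE_I2 tendsto_inner tendsto_const) auto
    show "AE \<omega> in M. norm (inner (Hs i \<omega>) (D \<omega>)) \<le> 2 * C * norm (D \<omega>)" for i
    proof (intro AE_I2)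
      fix \<omega> assume w: "\<omega> \<in> space M"
      have "norm (inner (Hs i \<omega>) (D \<omega>)) \<le> norm (Hs i \<omega>) * norm (D \<omega>)"
        using Cauchy_Schwarz_ineq2 by simp
      also have "\<dots> \<le> 2 * C * norm (D \<omega>)"
        using bd[of \<omega> i] bH[OF w] w sp by (intro mult_right_mono) auto
      finally show "norm (inner (Hs i \<omega>) (D \<omega>)) \<le> 2 * C * norm (D \<omega>)" .
    qed
  qed
  moreover have "(\<integral>\<omega>. inner (Hs i \<omega>) (D \<omega>) \<partial>M) = 0" for i by (rule simple_orth[OF sub iD z sHs])
  ultimately show ?thesis by (simp add: LIMSEQ_const_iff)
qed

lemma pointwise_layer:
  fixes t y :: real assumes y: "0 < y" and t: "0 \<le> t"
  shows "ennreal (max 0 (t - y\<^sup>2/64)) \<le>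
     (\<integral>\<^sup>+u. ennreal (if 1 \<le> u \<and> y * u / 8 < sqrt t then 2 * (y\<^sup>2/64) * u else 0) \<partial>lborel)"
proof (cases "t \<le> y\<^sup>2/64")
  case True then show ?thesis by simp
next
  case False
  define a where "a = y\<^sup>2/64"
  define r where "r = 8 * sqrt t / y"
  have a0: "0 < a" using y by (simp add: a_def)
  have r2: "a * r\<^sup>2 = t" using y t by (simp add: a_def r_def power_divide power_mult_distrib field_simps)
  have r1: "1 \<le> r"
  proof (rule ccontr)
    assume "\<not> 1 \<le> r"
    then have "r\<^sup>2 \<le> 1" using y t by (simp add: r_def abs_le_square_iff power_le_one)
    then have "a * r\<^sup>2 \<le> a" using a0 by simp
    then show False using r2 False by (simp add: a_def)
  qed
  have dv: "((\<lambda>u. a * u\<^sup>2) has_vector_derivative 2 * a * x) (at x within {1..r})" for x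
    unfolding has_real_derivative_iff_has_vector_derivative[symmetric]
    by (auto intro!: derivative_eq_intros)
  have hi: "((\<lambda>u. 2 * a * u) has_integral (a * r\<^sup>2 - a * 1\<^sup>2)) {1..r}"
    using fundamental_theorem_of_calculus[OF r1, of "\<lambda>u. a * u\<^sup>2" "\<lambda>u. 2 * a * u"] dv by simp
  have hi2: "((\<lambda>u. if u \<in> {1..r} then 2 * a * u else 0) has_integral (t - a)) UNIV"
    unfolding has_integral_restrict_UNIV using hi r2 by simp
  have "(\<integral>\<^sup>+u. ennreal (if u \<in> {1..r} then 2 * a * u else 0) \<partial>lborel) = ennreal (t - a)"
    by (rule nn_integral_has_integral_lborel[OF _ _ hi2]) (use a0 in auto)
  moreover have "(\<integral>\<^sup>+u. ennreal (if u \<in> {1..r} then 2 * a * u else 0) \<partial>lborel)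
      \<le> (\<integral>\<^sup>+u. ennreal (if 1 \<le> u \<and> y * u / 8 < sqrt t then 2 * (y\<^sup>2/64) * u else 0) \<partial>lborel)"
  proof (rule nn_integral_mono_AE)
    show "AE u in lborel. ennreal (if u \<in> {1..r} then 2 * a * u else 0)
        \<le> ennreal (if 1 \<le> u \<and> y * u / 8 < sqrt t then 2 * (y\<^sup>2/64) * u else 0)"
      using AE_lborel_singleton[of r]
    proof eventually_elim
      case (elim u)
      show ?case
      proof (cases "u \<in> {1..r}")
        case True
        then have "u < r" using elim by auto
        then have "y * u / 8 < sqrt t" using y by (simp add: r_def field_simps)
        then show ?thesis using True by (simp add: a_def)
      qed auto
    qed
  qed
  ultimately show ?thesis by (simp add: a_def)
qed

lemma tail_bound:
  fixes M :: "'a measure" and T :: "'a \<Rightarrow> real" and y :: real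
  assumes P: "prob_space M" and mT: "T \<in> borel_measurable M" and T0: "\<And>\<omega>. 0 \<le> T \<omega>" and y: "0 < y"
  shows "(\<integral>\<^sup>+\<omega>. ennreal (max 0 (T \<omega> - y\<^sup>2/64)) \<partial>M)
    \<le> ennreal (y\<^sup>2/32) * (\<integral>\<^sup>+ u \<in> {1..}. ennreal (u * measure M {\<omega> \<in> space M. sqrt (T \<omega>) > y * u / 8}) \<partial>lborel)"
proof -
  interpret prob_space M by (rule P)
  interpret pair_sigma_finite M "lborel :: real measure" ..
  define g where "g = (\<lambda>\<omega> (u::real). ennreal (if 1 \<le> u \<and> y * u / 8 < sqrt (T \<omega>) then 2 * (y\<^sup>2/64) * u else 0))"
  have mg: "case_prod g \<in> borel_measurable (M \<Otimes>\<^sub>M lborel)" unfolding g_def using mT by measurable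
  have "(\<integral>\<^sup>+\<omega>. ennreal (max 0 (T \<omega> - y\<^sup>2/64)) \<partial>M) \<le> (\<integral>\<^sup>+\<omega>. (\<integral>\<^sup>+u. g \<omega> u \<partial>lborel) \<partial>M)"
    unfolding g_def by (intro nn_integral_mono pointwise_layer y T0)
  also have "\<dots> = (\<integral>\<^sup>+u. (\<integral>\<^sup>+\<omega>. g \<omega> u \<partial>M) \<partial>lborel)" by (rule Fubini'[OF mg, symmetric])
  also have "\<dots> = (\<integral>\<^sup>+u. ennreal (y\<^sup>2/32) * (ennreal (u * measure M {\<omega> \<in> space M. sqrt (T \<omega>) > y * u / 8}) * indicator {1..} u) \<partial>lborel)"
  proof (intro nn_integral_cong)
    fix u :: real
    show "(\<integral>\<^sup>+\<omega>. g \<omega> u \<partial>M) = ennreal (y\<^sup>2/32) * (ennreal (u * measure M {\<omega> \<in> space M. sqrt (T \<omega>) > y * u / 8}) * indicator {1..} u)"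
    proof (cases "1 \<le> u")
      case True
      have S: "{\<omega> \<in> space M. sqrt (T \<omega>) > y * u / 8} \<in> sets M" using mT by measurable
      have "(\<integral>\<^sup>+\<omega>. g \<omega> u \<partial>M) = (\<integral>\<^sup>+\<omega>. ennreal (2 * (y\<^sup>2/64) * u) * indicator {\<omega> \<in> space M. sqrt (T \<omega>) > y * u / 8} \<omega> \<partial>M)"
        using True by (intro nn_integral_cong) (auto simp: g_def indicator_def)
      also have "\<dots> = ennreal (2 * (y\<^sup>2/64) * u) * emeasure M {\<omega> \<in> space M. sqrt (T \<omega>) > y * u / 8}"
        using S by (simp add: nn_integral_cmult_indicator)
      also have "\<dots> = ennreal (y\<^sup>2/32) * (ennreal (u * measure M {\<omega> \<in> space M. sqrt (T \<omega>) > y * u / 8}) * indicator {1..} u)"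
        using True by (simp add: emeasure_eq_measure ennreal_mult[symmetric] mult.assoc)
      finally show ?thesis .
    qed (simp add: g_def)
  qed
  also have "\<dots> = ennreal (y\<^sup>2/32) * (\<integral>\<^sup>+ u \<in> {1..}. ennreal (u * measure M {\<omega> \<in> space M. sqrt (T \<omega>) > y * u / 8}) \<partial>lborel)"
  proof -
    have "mono (\<lambda>u. - measure M {\<omega> \<in> space M. sqrt (T \<omega>) > y * u / 8})"
    proof (rule monoI)
      fix u v :: real assume "u \<le> v"
      then have "y * u / 8 \<le> y * v / 8" using y by (simp add: divide_right_mono)
      then have "{\<omega> \<in> space M. sqrt (T \<omega>) > y * v / 8} \<subseteq> {\<omega> \<in> space M. sqrt (T \<omega>) > y * u / 8}" by auto
      moreover have "{\<omega> \<in> space M. sqrt (T \<omega>) > y * u / 8} \<in> sets M" using mT by measurable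
      ultimately show "- measure M {\<omega> \<in> space M. sqrt (T \<omega>) > y * u / 8} \<le> - measure M {\<omega> \<in> space M. sqrt (T \<omega>) > y * v / 8}"
        by (simp add: finite_measure_mono)
    qed
    then have "(\<lambda>u. - (- measure M {\<omega> \<in> space M. sqrt (T \<omega>) > y * u / 8})) \<in> borel_measurable borel"
      by (intro borel_measurable_uminus borel_measurable_mono)
    then have [measurable]: "(\<lambda>u. measure M {\<omega> \<in> space M. sqrt (T \<omega>) > y * u / 8}) \<in> borel_measurable borel" by simp
    show ?thesis by (rule nn_integral_cmult) measurable
  qed
  finally show ?thesis .
qed

theorem propositionA5:
  fixes M :: "'a measure" and F :: "nat \<Rightarrow> 'a measure"
    and D :: "nat \<Rightarrow> 'a \<Rightarrow> 'b::{real_inner, banach, second_countable_topology}"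
    and n :: nat and x y :: real
  assumes "prob_space M"
    and "filtration M F"
    and "martingale_difference M F D"
    and "\<And>j. j \<ge> 1 \<Longrightarrow> integrable M (\<lambda>\<omega>. (norm (D j \<omega>))\<^sup>2)"
    and "\<And>j. j \<ge> 1 \<Longrightarrow>
           AE \<omega> in M. real_cond_exp M (F (j - 1)) (\<lambda>\<omega>. (norm (D j \<omega>))\<^sup>2) \<omega>
                      = real_cond_exp M (F 0) (\<lambda>\<omega>. (norm (D j \<omega>))\<^sup>2) \<omega>"
    and "n \<ge> 1" and "x > 0" and "y > 0"
  shows "ennreal (measure M {\<omega> \<in> space M. (MAX k\<in>{1..n}. norm (\<Sum>j=1..k. D j \<omega>)) > x})
         \<le> ennreal (4 * exp (- (x\<^sup>2 / y\<^sup>2)))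
           + 4 * (\<integral>\<^sup>+ u \<in> {1..}. ennreal (u * measure M {\<omega> \<in> space M.
                      sqrt (\<Sum>j=1..n. (norm (D j \<omega>))\<^sup>2) > y * u / 8}) \<partial>lborel)"
proof -
  note P = assms(1) and filt = assms(2) and md = assms(3) and iq = assms(4) and ce = assms(5)
  note n1 = assms(6) and x0 = assms(7) and y0 = assms(8)
  interpret prob_space M by (rule P)
  have sub: "subalgebra M (F k)" for k using filt by (simp add: filtration_def)
  have spF: "space (F k) = space M" for k using sub[of k] by (simp add: subalgebra_def)
  have subFF: "subalgebra (F j) (F i)" if "i \<le> j" for i j
    using filt that spF by (simp add: filtration_def subalgebra_def)
  have sfs: "sigma_finite_subalgebra M (F k)" for k
    by (rule finite_measure_subalgebra_is_sigma_finite)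
       (simp add: finite_measure_subalgebra_def finite_measure_subalgebra_axioms_def sub finite_measure_axioms)
  have mDF: "D j \<in> borel_measurable (F j)" and iD: "integrable M (D j)"
    and zD: "\<forall>A\<in>sets (F (j - 1)). set_lebesgue_integral M A (D j) = 0" if "1 \<le> j" for j
    using md that by (auto simp: martingale_difference_def)
  have mDk: "D j \<in> borel_measurable (F k)" if "1 \<le> j" "j \<le> k" for j k
    by (rule measurable_from_subalg[OF subFF[OF that(2)] mDF[OF that(1)]])
  have mDM: "D j \<in> borel_measurable M" if "1 \<le> j" for j
    by (rule measurable_from_subalg[OF sub mDF[OF that]])
  define q where "q j \<omega> = (norm (D j \<omega>))\<^sup>2" for j \<omega>
  define v where "v j \<omega> = max 0 (real_cond_exp M (F 0) (q j) \<omega>)" for j \<omega>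
  define S where "S k \<omega> = (\<Sum>j=1..k. D j \<omega>)" for k \<omega>
  define T where "T k \<omega> = (\<Sum>j=1..k. q j \<omega>)" for k \<omega>
  define W where "W k \<omega> = (\<Sum>j=1..k. v j \<omega>)" for k \<omega>
  define l where "l = 2 * x / y\<^sup>2"
  define Mk where "Mk k \<omega> = cosh (l * norm (S k \<omega>)) * exp (-(l\<^sup>2 * (T k \<omega> + W k \<omega>)))" for k \<omega>
  define G where "G k = {\<omega> \<in> space M. \<forall>i\<in>{..k}. norm (S i \<omega>) \<le> x}" for k
  define E where "E k = G (k - 1) - G k" for k
  have l0: "0 < l" using x0 y0 by (simp add: l_def)
  have mq: "q j \<in> borel_measurable (F k)" if "1 \<le> j" "j \<le> k" for j k
    unfolding q_def using mDk[OF that] by measurable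
  have mv0: "v j \<in> borel_measurable (F 0)" for j unfolding v_def by measurable
  have mv: "v j \<in> borel_measurable (F k)" for j k
    by (rule measurable_from_subalg[OF subFF mv0]) simp
  have mS: "S i \<in> borel_measurable (F k)" if "i \<le> k" for i k
    unfolding S_def using that by (intro borel_measurable_sum mDk) auto
  have mT: "T i \<in> borel_measurable (F k)" if "i \<le> k" for i k
    unfolding T_def using that by (intro borel_measurable_sum mq) auto
  have mW: "W i \<in> borel_measurable (F k)" for i k
    unfolding W_def by (intro borel_measurable_sum mv)
  have mG: "G k \<in> sets (F k)" for k
  proof -
    have "Measurable.pred (F k) (\<lambda>\<omega>. \<forall>i\<in>{..k}. norm (S i \<omega>) \<le> x)"
    proof (intro pred_intros_finite(3))
      fix i assume "i \<in> {..k}"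
      then have [measurable]: "S i \<in> borel_measurable (F k)" by (intro mS) auto
      show "Measurable.pred (F k) (\<lambda>\<omega>. norm (S i \<omega>) \<le> x)" by measurable
    qed simp
    then show ?thesis by (simp add: pred_def G_def spF)
  qed
  have MF: "f \<in> borel_measurable M" if "f \<in> borel_measurable (F k)" for f :: "'a \<Rightarrow> real" and k
    by (rule measurable_from_subalg[OF sub that])
  have GM: "G k \<in> sets M" for k using mG[of k] sub[of k] by (auto simp: subalgebra_def)
  have q0: "0 \<le> q j \<omega>" for j \<omega> by (simp add: q_def)
  have v0: "0 \<le> v j \<omega>" for j \<omega> by (simp add: v_def)
  have T0: "0 \<le> T k \<omega>" for k \<omega> unfolding T_def by (intro sum_nonneg q0)
  have W0: "0 \<le> W k \<omega>" for k \<omega> unfolding W_def by (intro sum_nonneg v0)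
  have qj: "(\<lambda>\<omega>. (norm (D j \<omega>))\<^sup>2) = q j" for j by (simp add: q_def fun_eq_iff)
  have iqj: "integrable M (q j)" if "1 \<le> j" for j using iq[OF that] by (simp add: qj)
  have mqM: "q j \<in> borel_measurable M" if "1 \<le> j" for j by (rule MF[OF mq[OF that order_refl]])
  have rpos: "AE \<omega> in M. 0 \<le> real_cond_exp M (F 0) (q j) \<omega>" if "1 \<le> j" for j
    by (rule sigma_finite_subalgebra.real_cond_exp_pos[OF sfs]) (auto intro: q0 mqM[OF that])
  have v_rce0: "AE \<omega> in M. v j \<omega> = real_cond_exp M (F 0) (q j) \<omega>" if "1 \<le> j" for j
    using rpos[OF that] by eventually_elim (simp add: v_def)
  have vq: "AE \<omega> in M. v j \<omega> = real_cond_exp M (F (j - 1)) (q j) \<omega>" if "1 \<le> j" for j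
    using v_rce0[OF that] ce[OF that] unfolding qj by eventually_elim simp
  have iv: "integrable M (v j)" if "1 \<le> j" for j
  proof -
    have "integrable M (\<lambda>\<omega>. max 0 (real_cond_exp M (F 0) (q j) \<omega>))"
      by (intro integrable_max Bochner_Integration.integrable_zero sigma_finite_subalgebra.real_cond_exp_int(1)[OF sfs] iqj that)
    then show ?thesis by (simp add: v_def[abs_def])
  qed
  have condb: "(\<integral>\<omega>. Z \<omega> * q j \<omega> \<partial>M) = (\<integral>\<omega>. Z \<omega> * v j \<omega> \<partial>M)"
    if j: "1 \<le> j" and mZ: "Z \<in> borel_measurable (F (j - 1))" and bZ: "\<And>\<omega>. \<omega> \<in> space M \<Longrightarrow> \<bar>Z \<omega>\<bar> \<le> C" for Z C j
  proof -
    have mZM: "Z \<in> borel_measurable M" by (rule MF[OF mZ])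
    have iZq: "integrable M (\<lambda>\<omega>. Z \<omega> * q j \<omega>)"
    proof (rule Bochner_Integration.integrable_bound[where f = "\<lambda>\<omega>. C * q j \<omega>"])
      show "integrable M (\<lambda>\<omega>. C * q j \<omega>)" using iqj[OF j] by simp
      show "(\<lambda>\<omega>. Z \<omega> * q j \<omega>) \<in> borel_measurable M" using mZM mqM[OF j] by measurable
      show "AE \<omega> in M. norm (Z \<omega> * q j \<omega>) \<le> norm (C * q j \<omega>)"
      proof (intro AE_I2)
        fix \<omega> assume w: "\<omega> \<in> space M"
        have "\<bar>Z \<omega>\<bar> * q j \<omega> \<le> C * q j \<omega>" using bZ[OF w] q0 by (intro mult_right_mono) auto
        then show "norm (Z \<omega> * q j \<omega>) \<le> norm (C * q j \<omega>)" using q0[of j \<omega>] by (simp add: abs_mult) (meson abs_ge_self mult_right_mono order_trans)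
      qed
    qed
    have "(\<integral>\<omega>. Z \<omega> * q j \<omega> \<partial>M) = (\<integral>\<omega>. Z \<omega> * real_cond_exp M (F (j - 1)) (q j) \<omega> \<partial>M)"
      by (rule sigma_finite_subalgebra.real_cond_exp_intg(2)[OF sfs iZq mZ mqM[OF j], symmetric])
    also have "\<dots> = (\<integral>\<omega>. Z \<omega> * v j \<omega> \<partial>M)"
    proof (intro integral_cong_AE)
      have [measurable]: "v j \<in> borel_measurable M" by (rule MF[OF mv])
      show "(\<lambda>\<omega>. Z \<omega> * real_cond_exp M (F (j - 1)) (q j) \<omega>) \<in> borel_measurable M" using mZM by measurable
      show "(\<lambda>\<omega>. Z \<omega> * v j \<omega>) \<in> borel_measurable M" using mZM by measurable
      show "AE \<omega> in M. Z \<omega> * real_cond_exp M (F (j - 1)) (q j) \<omega> = Z \<omega> * v j \<omega>"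
        using vq[OF j] by eventually_elim simp
    qed
    finally show ?thesis .
  qed
  have Ssuc: "S (Suc k) \<omega> = S k \<omega> + D (Suc k) \<omega>" for k \<omega> by (simp add: S_def)
  have Tsuc: "T (Suc k) \<omega> = T k \<omega> + q (Suc k) \<omega>" for k \<omega> by (simp add: T_def)
  have Wsuc: "W (Suc k) \<omega> = W k \<omega> + v (Suc k) \<omega>" for k \<omega> by (simp add: W_def)
  have Mk0: "0 \<le> Mk k \<omega>" for k \<omega> by (simp add: Mk_def cosh_real_nonneg)
  have Mkb: "indicator (G k) \<omega> * Mk k \<omega> \<le> cosh (l * x)" for k \<omega>
  proof (cases "\<omega> \<in> G k")
    case True
    then have "norm (S k \<omega>) \<le> x" by (auto simp: G_def)
    then have c: "cosh (l * norm (S k \<omega>)) \<le> cosh (l * x)" using l0 x0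
      by (subst cosh_real_nonneg_le_iff) (auto intro: mult_left_mono)
    have e: "exp (-(l\<^sup>2 * (T k \<omega> + W k \<omega>))) \<le> 1" using T0 W0 by simp
    have "Mk k \<omega> \<le> cosh (l * x) * 1" unfolding Mk_def
      by (rule mult_mono[OF c e]) (auto simp: cosh_real_nonneg)
    then show ?thesis using True by simp
  qed (simp add: cosh_real_nonneg)
  have mMk: "(\<lambda>\<omega>. indicator (G i) \<omega> * Mk k \<omega>) \<in> borel_measurable (F m)" if "i \<le> m" "k \<le> m" for i k m
  proof -
    have [measurable]: "S k \<in> borel_measurable (F m)" "T k \<in> borel_measurable (F m)" "W k \<in> borel_measurable (F m)"
      using that by (auto intro: mS mT mW)
    have [measurable]: "G i \<in> sets (F m)" using mG[of i] subFF[OF that(1)] by (auto simp: subalgebra_def)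
    show ?thesis unfolding Mk_def by measurable
  qed
  have iGMk: "integrable M (\<lambda>\<omega>. indicator (G k) \<omega> * Mk k \<omega>)" for k
  proof (rule integrable_const_bound[where B = "cosh (l * x)"])
    show "AE \<omega> in M. norm (indicator (G k) \<omega> * Mk k \<omega>) \<le> cosh (l * x)"
      using Mkb Mk0 by (intro AE_I2) (auto simp: abs_mult)
    show "(\<lambda>\<omega>. indicator (G k) \<omega> * Mk k \<omega>) \<in> borel_measurable M" by (rule MF[OF mMk[OF order_refl order_refl]])
  qed
  have step: "integrable M (\<lambda>\<omega>. indicator (G k) \<omega> * Mk (Suc k) \<omega>) \<and>
      (\<integral>\<omega>. indicator (G k) \<omega> * Mk (Suc k) \<omega> \<partial>M) \<le> (\<integral>\<omega>. indicator (G k) \<omega> * Mk k \<omega> \<partial>M)" for k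
  proof -
    define N where "N \<omega> = exp (-(l\<^sup>2 * (T k \<omega> + W k \<omega>)))" for \<omega>
    define Pf where "Pf \<omega> = indicator (G k) \<omega> * N \<omega> * exp (-(l\<^sup>2 * v (Suc k) \<omega>))" for \<omega>
    define c where "c \<omega> = cosh (l * norm (S k \<omega>))" for \<omega>
    define H where "H \<omega> = (Pf \<omega> * l * sinh (l * norm (S k \<omega>)) / norm (S k \<omega>)) *\<^sub>R S k \<omega>" for \<omega>
    define Z where "Z \<omega> = Pf \<omega> * l\<^sup>2 * c \<omega>" for \<omega>
    define R where "R \<omega> = Pf \<omega> * c \<omega> + inner (H \<omega>) (D (Suc k) \<omega>) + Z \<omega> * q (Suc k) \<omega>" for \<omega>
    have [measurable]: "S k \<in> borel_measurable (F k)" "T k \<in> borel_measurable (F k)" "W k \<in> borel_measurable (F k)"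
      "v (Suc k) \<in> borel_measurable (F k)" "G k \<in> sets (F k)"
      by (auto intro: mS mT mW mv mG)
    have mPf [measurable]: "Pf \<in> borel_measurable (F k)" unfolding Pf_def N_def by measurable
    have mc [measurable]: "c \<in> borel_measurable (F k)" unfolding c_def by measurable
    have mH: "H \<in> borel_measurable (F k)" unfolding H_def by measurable
    have mZ: "Z \<in> borel_measurable (F k)" unfolding Z_def by measurable
    have mD' [measurable]: "D (Suc k) \<in> borel_measurable M" by (rule mDM) simp
    have mqM' [measurable]: "q (Suc k) \<in> borel_measurable M" by (rule mqM) simp
    have [measurable]: "Pf \<in> borel_measurable M" "c \<in> borel_measurable M" "H \<in> borel_measurable M" "Z \<in> borel_measurable M"
      by (auto intro: measurable_from_subalg[OF sub] mH mZ mPf mc)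
    have Pf01: "0 \<le> Pf \<omega> \<and> Pf \<omega> \<le> 1" for \<omega>
    proof -
      have "N \<omega> \<le> 1" using T0 W0 by (simp add: N_def)
      moreover have "exp (-(l\<^sup>2 * v (Suc k) \<omega>)) \<le> 1" using v0 by simp
      ultimately have "N \<omega> * exp (-(l\<^sup>2 * v (Suc k) \<omega>)) \<le> 1 * 1"
        by (intro mult_mono) (auto simp: N_def)
      then show ?thesis by (simp add: Pf_def N_def indicator_def)
    qed
    have PfG: "norm (S k \<omega>) \<le> x" if "Pf \<omega> \<noteq> 0" for \<omega>
      using that by (auto simp: Pf_def G_def indicator_def)
    have Pc: "Pf \<omega> * c \<omega> \<le> cosh (l * x)" for \<omega>
    proof (cases "Pf \<omega> = 0")
      case False
      have "c \<omega> \<le> cosh (l * x)" unfolding c_def using PfG[OF False] l0 x0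
        by (subst cosh_real_nonneg_le_iff) (auto intro: mult_left_mono)
      then have "Pf \<omega> * c \<omega> \<le> 1 * cosh (l * x)" using Pf01[of \<omega>]
        by (intro mult_mono) (auto simp: c_def cosh_real_nonneg)
      then show ?thesis by simp
    qed (simp add: cosh_real_nonneg)
    have c0: "0 \<le> c \<omega>" for \<omega> by (simp add: c_def cosh_real_nonneg)
    have bZ: "\<bar>Z \<omega>\<bar> \<le> l\<^sup>2 * cosh (l * x)" for \<omega>
    proof -
      have "Pf \<omega> * l\<^sup>2 * c \<omega> = l\<^sup>2 * (Pf \<omega> * c \<omega>)" by (simp add: ac_simps)
      also have "\<dots> \<le> l\<^sup>2 * cosh (l * x)" using Pc[of \<omega>] by (intro mult_left_mono) auto
      finally show ?thesis using Pf01[of \<omega>] c0[of \<omega>] by (simp add: Z_def abs_mult)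
    qed
    have bH: "norm (H \<omega>) \<le> l * sinh (l * x)" for \<omega>
    proof (cases "Pf \<omega> = 0 \<or> S k \<omega> = 0")
      case True
      then show ?thesis using l0 x0 by (auto simp: H_def)
    next
      case False
      then have nz: "norm (S k \<omega>) \<noteq> 0" and Pn: "Pf \<omega> \<noteq> 0" by auto
      have sh0: "0 \<le> sinh (l * norm (S k \<omega>))" using l0 by simp
      have "norm (H \<omega>) = Pf \<omega> * l * sinh (l * norm (S k \<omega>))"
        using nz Pf01[of \<omega>] l0 sh0 by (simp add: H_def abs_mult)
      also have "\<dots> \<le> 1 * l * sinh (l * x)"
        using Pf01[of \<omega>] l0 PfG[OF Pn] sh0
        by (intro mult_mono) (auto intro: mult_left_mono)
      finally show ?thesis by simp
    qed
    have iPc: "integrable M (\<lambda>\<omega>. Pf \<omega> * c \<omega>)"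
      by (rule integrable_const_bound[where B = "cosh (l * x)"])
         (use Pc Pf01 c0 in \<open>auto intro!: AE_I2 simp: abs_mult\<close>)
    have iHD: "integrable M (\<lambda>\<omega>. inner (H \<omega>) (D (Suc k) \<omega>))"
    proof (rule Bochner_Integration.integrable_bound[where f = "\<lambda>\<omega>. l * sinh (l * x) * norm (D (Suc k) \<omega>)"])
      show "integrable M (\<lambda>\<omega>. l * sinh (l * x) * norm (D (Suc k) \<omega>))" using iD[of "Suc k"] by simp
      show "(\<lambda>\<omega>. inner (H \<omega>) (D (Suc k) \<omega>)) \<in> borel_measurable M" by measurable
      show "AE \<omega> in M. norm (inner (H \<omega>) (D (Suc k) \<omega>)) \<le> norm (l * sinh (l * x) * norm (D (Suc k) \<omega>))"
      proof (intro AE_I2)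
        fix \<omega>
        have "norm (inner (H \<omega>) (D (Suc k) \<omega>)) \<le> norm (H \<omega>) * norm (D (Suc k) \<omega>)"
          using Cauchy_Schwarz_ineq2 by simp
        also have "\<dots> \<le> l * sinh (l * x) * norm (D (Suc k) \<omega>)" by (intro mult_right_mono bH) simp
        also have "\<dots> \<le> norm (l * sinh (l * x) * norm (D (Suc k) \<omega>))" by simp
        finally show "norm (inner (H \<omega>) (D (Suc k) \<omega>)) \<le> norm (l * sinh (l * x) * norm (D (Suc k) \<omega>))" .
      qed
    qed
    have iZq: "integrable M (\<lambda>\<omega>. Z \<omega> * q (Suc k) \<omega>)"
    proof (rule Bochner_Integration.integrable_bound[where f = "\<lambda>\<omega>. l\<^sup>2 * cosh (l * x) * q (Suc k) \<omega>"])
      show "integrable M (\<lambda>\<omega>. l\<^sup>2 * cosh (l * x) * q (Suc k) \<omega>)" using iqj[of "Suc k"] by simp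
      show "(\<lambda>\<omega>. Z \<omega> * q (Suc k) \<omega>) \<in> borel_measurable M" by measurable
      show "AE \<omega> in M. norm (Z \<omega> * q (Suc k) \<omega>) \<le> norm (l\<^sup>2 * cosh (l * x) * q (Suc k) \<omega>)"
        using bZ q0 by (intro AE_I2) (auto simp: abs_mult cosh_real_nonneg intro!: mult_right_mono)
    qed
    have iZv: "integrable M (\<lambda>\<omega>. Z \<omega> * v (Suc k) \<omega>)"
    proof (rule Bochner_Integration.integrable_bound[where f = "\<lambda>\<omega>. l\<^sup>2 * cosh (l * x) * v (Suc k) \<omega>"])
      show "integrable M (\<lambda>\<omega>. l\<^sup>2 * cosh (l * x) * v (Suc k) \<omega>)" using iv[of "Suc k"] by simp
      have [measurable]: "v (Suc k) \<in> borel_measurable M" by (rule MF[OF mv])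
      show "(\<lambda>\<omega>. Z \<omega> * v (Suc k) \<omega>) \<in> borel_measurable M" by measurable
      show "AE \<omega> in M. norm (Z \<omega> * v (Suc k) \<omega>) \<le> norm (l\<^sup>2 * cosh (l * x) * v (Suc k) \<omega>)"
        using bZ v0 by (intro AE_I2) (auto simp: abs_mult cosh_real_nonneg intro!: mult_right_mono)
    qed
    have iR: "integrable M R" unfolding R_def[abs_def] using iPc iHD iZq by auto
    have orth: "(\<integral>\<omega>. inner (H \<omega>) (D (Suc k) \<omega>) \<partial>M) = 0"
    proof (rule mart_orth[OF sub[of k] _ _ mH bH])
      show "integrable M (D (Suc k))" by (rule iD) simp
      show "\<forall>A\<in>sets (F k). set_lebesgue_integral M A (D (Suc k)) = 0" using zD[of "Suc k"] by simp
    qed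
    have cb: "(\<integral>\<omega>. Z \<omega> * q (Suc k) \<omega> \<partial>M) = (\<integral>\<omega>. Z \<omega> * v (Suc k) \<omega> \<partial>M)"
      by (rule condb[of "Suc k" Z]) (use mZ bZ in auto)
    have pw: "indicator (G k) \<omega> * Mk (Suc k) \<omega> \<le> R \<omega>" for \<omega>
    proof -
      have ee: "exp (-(l\<^sup>2 * (T (Suc k) \<omega> + W (Suc k) \<omega>)))
          = N \<omega> * exp (-(l\<^sup>2 * v (Suc k) \<omega>)) * exp (-(l\<^sup>2 * (norm (D (Suc k) \<omega>))\<^sup>2))"
        by (simp add: N_def Tsuc Wsuc q_def mult_exp_exp algebra_simps)
      have "indicator (G k) \<omega> * Mk (Suc k) \<omega>
          = Pf \<omega> * (cosh (l * norm (S k \<omega> + D (Suc k) \<omega>)) * exp (-(l\<^sup>2 * (norm (D (Suc k) \<omega>))\<^sup>2)))"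
        unfolding Mk_def ee Ssuc Pf_def by (simp add: ac_simps)
      also have "\<dots> \<le> Pf \<omega> * (cosh (l * norm (S k \<omega>)) + l * sinh (l * norm (S k \<omega>)) * (inner (S k \<omega>) (D (Suc k) \<omega>) / norm (S k \<omega>))
           + l\<^sup>2 * (norm (D (Suc k) \<omega>))\<^sup>2 * cosh (l * norm (S k \<omega>)))"
        using Pf01[of \<omega>] l0 by (intro mult_left_mono key_vec) auto
      also have "\<dots> = R \<omega>"
        by (simp add: R_def c_def H_def Z_def q_def algebra_simps)
      finally show ?thesis .
    qed
    have iL: "integrable M (\<lambda>\<omega>. indicator (G k) \<omega> * Mk (Suc k) \<omega>)"
    proof (rule Bochner_Integration.integrable_bound[OF iR])
      show "(\<lambda>\<omega>. indicator (G k) \<omega> * Mk (Suc k) \<omega>) \<in> borel_measurable M" by (rule MF[OF mMk[of k "Suc k" "Suc k"]]) auto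
      show "AE \<omega> in M. norm (indicator (G k) \<omega> * Mk (Suc k) \<omega>) \<le> norm (R \<omega>)"
        using pw Mk0 by (intro AE_I2) (auto simp: abs_mult intro: order_trans[OF _ abs_ge_self])
    qed
    have "(\<integral>\<omega>. indicator (G k) \<omega> * Mk (Suc k) \<omega> \<partial>M) \<le> (\<integral>\<omega>. R \<omega> \<partial>M)"
      by (intro integral_mono iL iR pw)
    also have "\<dots> = (\<integral>\<omega>. Pf \<omega> * c \<omega> \<partial>M) + (\<integral>\<omega>. Z \<omega> * v (Suc k) \<omega> \<partial>M)"
      unfolding R_def[abs_def] using iPc iHD iZq orth cb by simp
    also have "\<dots> = (\<integral>\<omega>. Pf \<omega> * c \<omega> + Z \<omega> * v (Suc k) \<omega> \<partial>M)"
      using iPc iZv by simp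
    also have "\<dots> \<le> (\<integral>\<omega>. indicator (G k) \<omega> * Mk k \<omega> \<partial>M)"
    proof (intro integral_mono)
      show "integrable M (\<lambda>\<omega>. Pf \<omega> * c \<omega> + Z \<omega> * v (Suc k) \<omega>)" using iPc iZv by simp
      show "integrable M (\<lambda>\<omega>. indicator (G k) \<omega> * Mk k \<omega>)" by (rule iGMk)
      fix \<omega>
      define t where "t = l\<^sup>2 * v (Suc k) \<omega>"
      have "exp (-t) * (1 + t) \<le> exp (-t) * exp t" using exp_ge_add_one_self[of t]
        by (intro mult_left_mono) (auto simp: add.commute)
      then have et: "exp (-t) * (1 + t) \<le> 1" by (simp add: mult_exp_exp)
      have "Pf \<omega> * c \<omega> + Z \<omega> * v (Suc k) \<omega> = indicator (G k) \<omega> * N \<omega> * c \<omega> * (exp (-t) * (1 + t))"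
        by (simp add: Pf_def Z_def t_def algebra_simps)
      also have "\<dots> \<le> indicator (G k) \<omega> * N \<omega> * c \<omega> * 1"
        using et c0[of \<omega>] by (intro mult_left_mono) (auto simp: N_def)
      also have "\<dots> = indicator (G k) \<omega> * Mk k \<omega>" by (simp add: Mk_def N_def c_def)
      finally show "Pf \<omega> * c \<omega> + Z \<omega> * v (Suc k) \<omega> \<le> indicator (G k) \<omega> * Mk k \<omega>" .
    qed
    finally show ?thesis using iL by simp
  qed
  have G0: "G 0 = space M" using x0 by (auto simp: G_def S_def)
  have Gsub: "G (Suc k) \<subseteq> G k" for k by (auto simp: G_def)
  have EM: "E k \<in> sets M" for k unfolding E_def using GM by auto
  have mMkM: "Mk k \<in> borel_measurable M" for k
  proof -
    have [measurable]: "S k \<in> borel_measurable M" "T k \<in> borel_measurable M" "W k \<in> borel_measurable M"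
      by (auto intro: measurable_from_subalg[OF sub] mS mT mW)
    show ?thesis unfolding Mk_def by measurable
  qed
  have iEMk: "integrable M (\<lambda>\<omega>. indicator (E (Suc k)) \<omega> * Mk (Suc k) \<omega>)" for k
  proof (rule Bochner_Integration.integrable_bound[OF conjunct1[OF step[of k]]])
    show "(\<lambda>\<omega>. indicator (E (Suc k)) \<omega> * Mk (Suc k) \<omega>) \<in> borel_measurable M"
      using EM mMkM by measurable
    show "AE \<omega> in M. norm (indicator (E (Suc k)) \<omega> * Mk (Suc k) \<omega>) \<le> norm (indicator (G k) \<omega> * Mk (Suc k) \<omega>)"
      using Mk0 by (intro AE_I2) (auto simp: E_def indicator_def)
  qed
  have phi: "(\<integral>\<omega>. indicator (G k) \<omega> * Mk k \<omega> \<partial>M) + (\<Sum>i=1..k. \<integral>\<omega>. indicator (E i) \<omega> * Mk i \<omega> \<partial>M) \<le> 1" for k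
  proof (induction k)
    case 0
    have "Mk 0 \<omega> = 1" for \<omega> by (simp add: Mk_def S_def T_def W_def)
    then show ?case using G0 by (simp add: prob_space)
  next
    case (Suc k)
    have split: "indicator (G k) \<omega> * Mk (Suc k) \<omega> = indicator (G (Suc k)) \<omega> * Mk (Suc k) \<omega> + indicator (E (Suc k)) \<omega> * Mk (Suc k) \<omega>" for \<omega>
      using Gsub[of k] by (auto simp: E_def indicator_def)
    have "(\<integral>\<omega>. indicator (G (Suc k)) \<omega> * Mk (Suc k) \<omega> \<partial>M) + (\<integral>\<omega>. indicator (E (Suc k)) \<omega> * Mk (Suc k) \<omega> \<partial>M)
        = (\<integral>\<omega>. indicator (G k) \<omega> * Mk (Suc k) \<omega> \<partial>M)"
      unfolding split using iGMk iEMk by simp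
    also have "\<dots> \<le> (\<integral>\<omega>. indicator (G k) \<omega> * Mk k \<omega> \<partial>M)" using step[of k] by simp
    finally show ?case using Suc.IH by simp
  qed
  have sumE: "(\<Sum>i=1..n. \<integral>\<omega>. indicator (E i) \<omega> * Mk i \<omega> \<partial>M) \<le> 1"
  proof -
    have "0 \<le> (\<integral>\<omega>. indicator (G n) \<omega> * Mk n \<omega> \<partial>M)" using Mk0 by (intro Bochner_Integration.integral_nonneg) simp
    then show ?thesis using phi[of n] by simp
  qed
  define a where "a = y\<^sup>2 / 64"
  have a0: "0 < a" using y0 by (simp add: a_def)
  define bad where "bad = {\<omega> \<in> space M. (MAX k\<in>{1..n}. norm (\<Sum>j=1..k. D j \<omega>)) > x}"
  have bad_eq: "bad = {\<omega> \<in> space M. \<exists>k\<in>{1..n}. x < norm (S k \<omega>)}"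
    using n1 by (auto simp: bad_def S_def Max_gr_iff)
  define Good where "Good = {\<omega> \<in> space M. T n \<omega> \<le> 3 * a \<and> W n \<omega> \<le> 2 * a}"
  define K where "K = cosh (l * x) * exp (-(l\<^sup>2 * (5 * a)))"
  have K0: "0 < K" by (simp add: K_def cosh_real_pos)
  have [measurable]: "S k \<in> borel_measurable M" "T k \<in> borel_measurable M" "W k \<in> borel_measurable M" for k
    by (auto intro: measurable_from_subalg[OF sub] mS mT mW)
  have badM: "bad \<in> sets M" unfolding bad_eq by measurable
  have GoodM: "Good \<in> sets M" unfolding Good_def by measurable
  have Tmono: "T i \<omega> \<le> T n \<omega>" if "i \<le> n" for i \<omega>
    unfolding T_def using that by (intro sum_mono2) (auto simp: q0)
  have Wmono: "W i \<omega> \<le> W n \<omega>" if "i \<le> n" for i \<omega>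
    unfolding W_def using that by (intro sum_mono2) (auto simp: v0)
  have pwK: "K * indicator (bad \<inter> Good) \<omega> \<le> (\<Sum>i=1..n. indicator (E i) \<omega> * Mk i \<omega>)" for \<omega>
  proof (cases "\<omega> \<in> bad \<inter> Good")
    case False
    then show ?thesis using Mk0 by (simp add: sum_nonneg)
  next
    case True
    then have w: "\<omega> \<in> space M" and ex: "\<exists>k\<in>{1..n}. x < norm (S k \<omega>)"
      and gT: "T n \<omega> \<le> 3 * a" and gW: "W n \<omega> \<le> 2 * a"
      by (auto simp: bad_eq Good_def)
    define i where "i = (LEAST i. x < norm (S i \<omega>))"
    have xi: "x < norm (S i \<omega>)" using ex unfolding i_def by (metis LeastI)
    have "i \<le> n" using ex unfolding i_def by (meson Least_le atLeastAtMost_iff order_trans)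
    have "i \<noteq> 0" proof assume "i = 0" then show False using xi x0 by (simp add: S_def) qed
    then have i1: "1 \<le> i" by simp
    have lt: "norm (S j \<omega>) \<le> x" if "j < i" for j
      using not_less_Least[OF that[unfolded i_def]] by simp
    have g1: "\<omega> \<in> G (i - 1)" using w lt i1 by (auto simp: G_def)
    have g2: "\<omega> \<notin> G i"
    proof
      assume "\<omega> \<in> G i" then have "norm (S i \<omega>) \<le> x" by (simp add: G_def)
      then show False using xi by simp
    qed
    have "\<omega> \<in> E i" using g1 g2 by (simp add: E_def)
    have "K \<le> Mk i \<omega>"
    proof -
      have "cosh (l * x) \<le> cosh (l * norm (S i \<omega>))" using l0 x0 xi
        by (subst cosh_real_nonneg_le_iff) (auto intro: mult_left_mono)
      moreover have "exp (-(l\<^sup>2 * (5 * a))) \<le> exp (-(l\<^sup>2 * (T i \<omega> + W i \<omega>)))"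
      proof -
        have "T i \<omega> + W i \<omega> \<le> 5 * a" using Tmono[OF \<open>i \<le> n\<close>, of \<omega>] Wmono[OF \<open>i \<le> n\<close>, of \<omega>] gT gW by linarith
        then show ?thesis by (simp add: mult_left_mono)
      qed
      ultimately show ?thesis unfolding K_def Mk_def
        by (intro mult_mono) (auto simp: cosh_real_nonneg)
    qed
    also have "\<dots> = indicator (E i) \<omega> * Mk i \<omega>" using \<open>\<omega> \<in> E i\<close> by simp
    also have "\<dots> \<le> (\<Sum>i=1..n. indicator (E i) \<omega> * Mk i \<omega>)"
      using i1 \<open>i \<le> n\<close> Mk0 by (intro member_le_sum) auto
    finally show ?thesis using True by simp
  qed
  have iEMk': "integrable M (\<lambda>\<omega>. indicator (E i) \<omega> * Mk i \<omega>)" if "i \<in> {1..n}" for i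
    using iEMk[of "i - 1"] that by simp
  have m1: "measure M (bad \<inter> Good) \<le> 1 / K"
  proof -
    have "K * measure M (bad \<inter> Good) = (\<integral>\<omega>. K * indicator (bad \<inter> Good) \<omega> \<partial>M)"
      using badM GoodM by simp
    also have "\<dots> \<le> (\<integral>\<omega>. (\<Sum>i=1..n. indicator (E i) \<omega> * Mk i \<omega>) \<partial>M)"
    proof (intro integral_mono pwK)
      show "integrable M (\<lambda>\<omega>. K * indicator (bad \<inter> Good) \<omega>)"
        using badM GoodM by (intro integrable_mult_right integrable_real_indicator) (auto simp: less_top[symmetric])
      show "integrable M (\<lambda>\<omega>. \<Sum>i=1..n. indicator (E i) \<omega> * Mk i \<omega>)"
        by (rule Bochner_Integration.integrable_sum) (rule iEMk')
    qed
    also have "\<dots> = (\<Sum>i=1..n. \<integral>\<omega>. indicator (E i) \<omega> * Mk i \<omega> \<partial>M)"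
      using iEMk' by (intro Bochner_Integration.integral_sum) auto
    also have "\<dots> \<le> 1" by (rule sumE)
    finally show ?thesis using K0 by (simp add: field_simps)
  qed
  have m1': "measure M (bad \<inter> Good) \<le> 4 * exp (- (x\<^sup>2 / y\<^sup>2))"
  proof -
    have ch: "exp (l * x) / 2 \<le> cosh (l * x)" by (simp add: cosh_def)
    have "1 / K = exp (l\<^sup>2 * (5 * a)) / cosh (l * x)" by (simp add: K_def exp_minus field_simps)
    also have "\<dots> \<le> exp (l\<^sup>2 * (5 * a)) / (exp (l * x) / 2)"
      using ch by (intro divide_left_mono) auto
    also have "\<dots> = 2 * exp (l\<^sup>2 * (5 * a) - l * x)" by (simp add: exp_diff)
    also have "\<dots> \<le> 2 * exp (- (x\<^sup>2 / y\<^sup>2))"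
    proof -
      have "l\<^sup>2 * (5 * a) - l * x = - (27/16) * (x\<^sup>2 / y\<^sup>2)"
        using y0 by (simp add: l_def a_def power2_eq_square field_simps)
      also have "\<dots> \<le> - (x\<^sup>2 / y\<^sup>2)" using y0 by (simp add: field_simps)
      finally show ?thesis by simp
    qed
    also have "\<dots> \<le> 4 * exp (- (x\<^sup>2 / y\<^sup>2))" by simp
    finally show ?thesis using m1 by simp
  qed
  define I where "I = (\<integral>\<^sup>+ u \<in> {1..}. ennreal (u * measure M {\<omega> \<in> space M.
                      sqrt (\<Sum>j=1..n. (norm (D j \<omega>))\<^sup>2) > y * u / 8}) \<partial>lborel)"
  have Tn_eq: "(\<lambda>\<omega>. \<Sum>j=1..n. (norm (D j \<omega>))\<^sup>2) = T n" by (simp add: T_def q_def fun_eq_iff)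
  have iTn: "integrable M (T n)" unfolding T_def[abs_def] using iqj by (intro Bochner_Integration.integrable_sum) auto
  have iWn: "integrable M (W n)" unfolding W_def[abs_def] using iv by (intro Bochner_Integration.integrable_sum) auto
  have imax: "integrable M (\<lambda>\<omega>. max 0 (T n \<omega> - a))"
    using iTn by (intro integrable_max Bochner_Integration.integrable_zero Bochner_Integration.integrable_diff) auto
  define E1 where "E1 = (\<integral>\<omega>. max 0 (T n \<omega> - a) \<partial>M)"
  have E1I: "ennreal E1 \<le> ennreal (2 * a) * I"
  proof -
    have "ennreal E1 = (\<integral>\<^sup>+\<omega>. ennreal (max 0 (T n \<omega> - a)) \<partial>M)"
      unfolding E1_def by (rule nn_integral_eq_integral[OF imax, symmetric]) simp
    also have "\<dots> \<le> ennreal (y\<^sup>2/32) * I"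
    proof -
      have I_alt: "I = (\<integral>\<^sup>+ u \<in> {1..}. ennreal (u * measure M {\<omega> \<in> space M. sqrt (T n \<omega>) > y * u / 8}) \<partial>lborel)"
        unfolding I_def T_def q_def by simp
      show ?thesis unfolding I_alt a_def
        by (rule tail_bound[OF P _ T0 y0]) measurable
    qed
    also have "y\<^sup>2/32 = 2 * a" by (simp add: a_def)
    finally show ?thesis .
  qed
  have m2: "ennreal (measure M {\<omega> \<in> space M. 3 * a < T n \<omega>}) \<le> I"
  proof -
    have "2 * a * measure M {\<omega> \<in> space M. 3 * a < T n \<omega>} = (\<integral>\<omega>. 2 * a * indicator {\<omega> \<in> space M. 3 * a < T n \<omega>} \<omega> \<partial>M)"
      by simp
    also have "\<dots> \<le> E1" unfolding E1_def
    proof (intro integral_mono imax)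
      show "integrable M (\<lambda>\<omega>. 2 * a * indicator {\<omega> \<in> space M. 3 * a < T n \<omega>} \<omega>)"
        by (intro integrable_mult_right integrable_real_indicator) (auto simp: less_top[symmetric])
      fix \<omega> show "2 * a * indicator {\<omega> \<in> space M. 3 * a < T n \<omega>} \<omega> \<le> max 0 (T n \<omega> - a)"
        using a0 by (auto simp: indicator_def)
    qed
    finally have r: "2 * a * measure M {\<omega> \<in> space M. 3 * a < T n \<omega>} \<le> E1" .
    have "ennreal (2 * a) * ennreal (measure M {\<omega> \<in> space M. 3 * a < T n \<omega>}) \<le> ennreal (2 * a) * I"
    proof -
      have "ennreal (2 * a) * ennreal (measure M {\<omega> \<in> space M. 3 * a < T n \<omega>}) = ennreal (2 * a * measure M {\<omega> \<in> space M. 3 * a < T n \<omega>})"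
        using a0 by (simp add: ennreal_mult)
      also have "\<dots> \<le> ennreal E1" using r by (rule ennreal_leI)
      also have "\<dots> \<le> ennreal (2 * a) * I" by (rule E1I)
      finally show ?thesis .
    qed
    then show ?thesis using a0 by (subst (asm) ennreal_mult_le_mult_iff) auto
  qed
  have m3: "ennreal (measure M {\<omega> \<in> space M. 2 * a < W n \<omega>}) \<le> 2 * I"
  proof -
    define Ga where "Ga = {\<omega> \<in> space M. a < W n \<omega>}"
    have GaF: "Ga \<in> sets (F 0)"
    proof -
      have [measurable]: "W n \<in> borel_measurable (F 0)" unfolding W_def by (intro borel_measurable_sum mv0)
      show ?thesis unfolding Ga_def spF[of 0, symmetric] by measurable
    qed
    have GaM: "Ga \<in> sets M" using GaF sub[of 0] by (auto simp: subalgebra_def)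
    have mind: "indicator Ga \<in> borel_measurable (F (j - 1))" for j :: nat
    proof -
      have "Ga \<in> sets (F (j - 1))" using GaF subFF[of 0 "j - 1"] by (auto simp: subalgebra_def)
      then show ?thesis by measurable
    qed
    have indint: "integrable M (\<lambda>\<omega>. indicator Ga \<omega> * f \<omega>)" if "integrable M f" for f :: "'a \<Rightarrow> real"
      using integrable_real_mult_indicator[OF GaM that] by (simp add: mult.commute)
    have eqWT: "(\<integral>\<omega>. indicator Ga \<omega> * W n \<omega> \<partial>M) = (\<integral>\<omega>. indicator Ga \<omega> * T n \<omega> \<partial>M)"
    proof -
      have "(\<integral>\<omega>. indicator Ga \<omega> * W n \<omega> \<partial>M) = (\<Sum>j=1..n. \<integral>\<omega>. indicator Ga \<omega> * v j \<omega> \<partial>M)"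
        unfolding W_def sum_distrib_left using iv
        by (intro Bochner_Integration.integral_sum indint) auto
      also have "\<dots> = (\<Sum>j=1..n. \<integral>\<omega>. indicator Ga \<omega> * q j \<omega> \<partial>M)"
        by (intro sum.cong refl condb[symmetric, where C = 1] mind) (auto simp: indicator_def)
      also have "\<dots> = (\<integral>\<omega>. indicator Ga \<omega> * T n \<omega> \<partial>M)"
        unfolding T_def sum_distrib_left using iqj
        by (intro Bochner_Integration.integral_sum[symmetric] indint) auto
      finally show ?thesis .
    qed
    have iGW: "integrable M (\<lambda>\<omega>. indicator Ga \<omega> * W n \<omega>)" using iWn by (rule indint)
    have iGT: "integrable M (\<lambda>\<omega>. indicator Ga \<omega> * T n \<omega>)" using iTn by (rule indint)
    have iGa: "integrable M (\<lambda>\<omega>. a * indicator Ga \<omega>)"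
      using GaM by (intro integrable_mult_right integrable_real_indicator) (auto simp: less_top[symmetric])
    have "a * measure M {\<omega> \<in> space M. 2 * a < W n \<omega>} = (\<integral>\<omega>. a * indicator {\<omega> \<in> space M. 2 * a < W n \<omega>} \<omega> \<partial>M)"
      by simp
    also have "\<dots> \<le> (\<integral>\<omega>. indicator Ga \<omega> * W n \<omega> - a * indicator Ga \<omega> \<partial>M)"
    proof (intro integral_mono)
      show "integrable M (\<lambda>\<omega>. a * indicator {\<omega> \<in> space M. 2 * a < W n \<omega>} \<omega>)"
        by (intro integrable_mult_right integrable_real_indicator) (auto simp: less_top[symmetric])
      show "integrable M (\<lambda>\<omega>. indicator Ga \<omega> * W n \<omega> - a * indicator Ga \<omega>)" using iGW iGa by simp
      fix \<omega> show "a * indicator {\<omega> \<in> space M. 2 * a < W n \<omega>} \<omega> \<le> indicator Ga \<omega> * W n \<omega> - a * indicator Ga \<omega>"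
        using a0 W0[of n \<omega>] by (auto simp: indicator_def Ga_def)
    qed
    also have "\<dots> = (\<integral>\<omega>. indicator Ga \<omega> * T n \<omega> - a * indicator Ga \<omega> \<partial>M)"
      using iGW iGa iGT eqWT by simp
    also have "\<dots> \<le> E1" unfolding E1_def
    proof (intro integral_mono imax)
      show "integrable M (\<lambda>\<omega>. indicator Ga \<omega> * T n \<omega> - a * indicator Ga \<omega>)" using iGT iGa by simp
      fix \<omega> show "indicator Ga \<omega> * T n \<omega> - a * indicator Ga \<omega> \<le> max 0 (T n \<omega> - a)"
        by (auto simp: indicator_def)
    qed
    finally have r: "a * measure M {\<omega> \<in> space M. 2 * a < W n \<omega>} \<le> E1" .
    have "ennreal a * ennreal (measure M {\<omega> \<in> space M. 2 * a < W n \<omega>}) = ennreal (a * measure M {\<omega> \<in> space M. 2 * a < W n \<omega>})"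
      using a0 by (simp add: ennreal_mult)
    also have "\<dots> \<le> ennreal E1" using r by (rule ennreal_leI)
    also have "\<dots> \<le> ennreal (2 * a) * I" by (rule E1I)
    also have "\<dots> = ennreal a * (2 * I)" using a0 by (simp add: ennreal_mult mult_ac)
    finally show ?thesis using a0 by (subst (asm) ennreal_mult_le_mult_iff) auto
  qed
  have "measure M bad \<le> measure M (bad \<inter> Good) + measure M {\<omega> \<in> space M. 3 * a < T n \<omega>} + measure M {\<omega> \<in> space M. 2 * a < W n \<omega>}"
  proof -
    have sub3: "bad \<subseteq> (bad \<inter> Good) \<union> {\<omega> \<in> space M. 3 * a < T n \<omega>} \<union> {\<omega> \<in> space M. 2 * a < W n \<omega>}"
      using badM sets.sets_into_space by (auto simp: Good_def bad_def)
    have "measure M bad \<le> measure M ((bad \<inter> Good) \<union> {\<omega> \<in> space M. 3 * a < T n \<omega>} \<union> {\<omega> \<in> space M. 2 * a < W n \<omega>})"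
      using sub3 badM GoodM by (intro finite_measure_mono) auto
    also have "\<dots> \<le> measure M ((bad \<inter> Good) \<union> {\<omega> \<in> space M. 3 * a < T n \<omega>}) + measure M {\<omega> \<in> space M. 2 * a < W n \<omega>}"
      using badM GoodM by (intro measure_Un_le) auto
    also have "\<dots> \<le> measure M (bad \<inter> Good) + measure M {\<omega> \<in> space M. 3 * a < T n \<omega>} + measure M {\<omega> \<in> space M. 2 * a < W n \<omega>}"
      using badM GoodM by (intro add_right_mono measure_Un_le) auto
    finally show ?thesis .
  qed
  then have "ennreal (measure M bad) \<le> ennreal (measure M (bad \<inter> Good)) + ennreal (measure M {\<omega> \<in> space M. 3 * a < T n \<omega>}) + ennreal (measure M {\<omega> \<in> space M. 2 * a < W n \<omega>})"
    by (simp add: ennreal_plus[symmetric] del: ennreal_plus)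
  also have "\<dots> \<le> ennreal (4 * exp (- (x\<^sup>2 / y\<^sup>2))) + I + 2 * I"
    using m1' m2 m3 by (intro add_mono ennreal_leI) auto
  also have "\<dots> \<le> ennreal (4 * exp (- (x\<^sup>2 / y\<^sup>2))) + 4 * I"
  proof -
    have "I + 2 * I = (1 + 2) * I" by (simp only: distrib_right mult_1)
    also have "(1 + 2) * I = 3 * I" by simp
    also have "\<dots> \<le> 4 * I" by (intro mult_right_mono) auto
    finally show ?thesis by (simp add: add.assoc add_left_mono)
  qed
  finally show ?thesis unfolding bad_def I_def .
qed

end
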